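(* Under the setup below, fix $K=(k_1,\dots,k_r)$ and two distinct ordered tuples $L,L'$ of $r$ distinct target indices in $[d]$. Let $M_{L,L'}(y)$ be the $\binom{2r-1}{r}\times2$ matrix whose rows are indexed by all $\alpha\in\mathbb N^r$ with $|\alpha|=r$ and whose row $\alpha$ is $(D_{\alpha,L}(y),D_{\alpha,L'}(y))$. Then all $2\times2$ minors of $M_{L,L'}(y)$ are homogeneous polynomials of degree $2r$ vanishing on the attention variety.
   Context: Setup: $d'=1$, $t>1$, $Q,K\in\mathbb R^{a\times d}$, $V\in\mathbb R^{1\times d}$ with row $v$, $A=K^\top Q$, $\varphi_W(X)=VX(X^\top AX)$, $X=(x_{kn})\in\mathbb R^{d\times t}$; fix $j\in[t]$, $n\ne j$, and $2\le r\le\min(a,d)$; $k_1,\dots,k_r$ are distinct elements of $[d]$. $y_{n,j}(\mathcal A,b)$ denotes the coefficient of $(\prod_{u\in\mathcal A}x_{un})x_{bj}$ in $\varphi_W(X)[1,j]$ divided by the number of distinct orderings of the size-2 multiset $\mathcal A$; $\omega(u,w)=1$ if $u=w$, $2$ otherwise. For $\alpha\in\mathbb N^r$ with $|\alpha|=r$, choose $f:[r]\to[r]$ with $|f^{-1}(m)|=\alpha_m$ whose only directed cycles are fixed points, and for a tuple $L=(l_1,\dots,l_r)$ of distinct indices set $D_{\alpha,L}(y)=\det\big(\omega(k_{f(p)},k_p)\,y_{n,j}(\{k_{f(p)},k_p\},l_q)\big)_{p,q=1}^r$; on $\mu(W)$ this equals $(\prod_m v_{k_m}^{\alpha_m})\det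 A_{K,L}$. $\mu$ maps $W$ to all scaled coefficients; the attention variety is the Zariski closure of $\operatorname{im}\mu$. *)

theory Defs
  imports "HOL-Library.Poly_Mapping" "Jordan_Normal_Form.Determinant"
begin

type_synonym 'v rpoly = "('v \<Rightarrow>\<^sub>0 nat) \<Rightarrow>\<^sub>0 real"

definition pvar :: "'v \<Rightarrow> 'v rpoly" where
  "pvar x = Poly_Mapping.single (Poly_Mapping.single x 1) 1"

definition pconst :: "real \<Rightarrow> 'v rpoly" where
  "pconst c = Poly_Mapping.single 0 c"

definition peval :: "('v \<Rightarrow> real) \<Rightarrow> 'v rpoly \<Rightarrow> real" where
  "peval z P = (\<Sum>m\<in>Poly_Mapping.keys P.
       Poly_Mapping.lookup P m * (\<Prod>x\<in>Poly_Mapping.keys m. z x ^ Poly_Mapping.lookup m x))"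

definition mdeg :: "('v \<Rightarrow>\<^sub>0 nat) \<Rightarrow> nat" where
  "mdeg m = (\<Sum>x\<in>Poly_Mapping.keys m. Poly_Mapping.lookup m x)"

definition homogeneous_of_degree :: "nat \<Rightarrow> 'v rpoly \<Rightarrow> bool" where
  "homogeneous_of_degree deg P \<longleftrightarrow> (\<forall>m\<in>Poly_Mapping.keys P. mdeg m = deg)"

definition zariski_closure :: "('v \<Rightarrow> real) set \<Rightarrow> ('v \<Rightarrow> real) set" where
  "zariski_closure S = {z. \<forall>P. (\<forall>w\<in>S. peval w P = 0) \<longrightarrow> peval z P = 0}"

text \<open>Indices are 0-based: [a] = {0..<a}, [d] = {0..<d}, [t] = {0..<t}.
  Q, K : a \<times> d matrices (functions nat \<Rightarrow> nat \<Rightarrow> real, Q i k = Q[i,k]);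
  V = row vector v : nat \<Rightarrow> real.  The entries of X are the variables (k, n) = x_{kn}.\<close>

definition Amat :: "nat \<Rightarrow> (nat \<Rightarrow> nat \<Rightarrow> real) \<Rightarrow> (nat \<Rightarrow> nat \<Rightarrow> real) \<Rightarrow> nat \<Rightarrow> nat \<Rightarrow> real" where
  "Amat a Q K p q = (\<Sum>i<a. K i p * Q i q)"

text \<open>phi_W(X)[1,j] = sum_m (V X)[1,m] * (X^T A X)[m,j], as a polynomial in the x_{kn}.\<close>
definition phi_poly :: "nat \<Rightarrow> nat \<Rightarrow> nat \<Rightarrow> (nat \<Rightarrow> nat \<Rightarrow> real) \<Rightarrow> (nat \<Rightarrow> nat \<Rightarrow> real)
    \<Rightarrow> (nat \<Rightarrow> real) \<Rightarrow> nat \<Rightarrow> (nat \<times> nat) rpoly" where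
  "phi_poly a d t Q K v j =
     (\<Sum>m<t. (\<Sum>u<d. pconst (v u) * pvar (u, m)) *
            (\<Sum>p<d. \<Sum>q<d. pvar (p, m) * pconst (Amat a Q K p q) * pvar (q, j)))"

definition orderings :: "nat \<Rightarrow> ((nat \<times> nat) \<Rightarrow>\<^sub>0 nat) \<Rightarrow> nat" where
  "orderings j mo =
     fact (\<Sum>x\<in>{x\<in>Poly_Mapping.keys mo. snd x \<noteq> j}. Poly_Mapping.lookup mo x)
     div (\<Prod>x\<in>{x\<in>Poly_Mapping.keys mo. snd x \<noteq> j}. fact (Poly_Mapping.lookup mo x))"

text \<open>Coordinates of the ambient space: pairs (j, mo) = coefficient of monomial mo in
  the output entry phi_W(X)[1,j].  mu(W) lists all scaled coefficients.\<close>
type_synonym coord = "nat \<times> ((nat \<times> nat) \<Rightarrow>\<^sub>0 nat)"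

definition mu :: "nat \<Rightarrow> nat \<Rightarrow> nat \<Rightarrow> (nat \<Rightarrow> nat \<Rightarrow> real) \<Rightarrow> (nat \<Rightarrow> nat \<Rightarrow> real)
    \<Rightarrow> (nat \<Rightarrow> real) \<Rightarrow> coord \<Rightarrow> real" where
  "mu a d t Q K v c = (case c of (j, mo) \<Rightarrow>
      if j < t then Poly_Mapping.lookup (phi_poly a d t Q K v j) mo / real (orderings j mo)
      else 0)"

definition attention_variety :: "nat \<Rightarrow> nat \<Rightarrow> nat \<Rightarrow> (coord \<Rightarrow> real) set" where
  "attention_variety a d t =
     zariski_closure (range (\<lambda>(Q, K, v). mu a d t Q K v))"

text \<open>The coordinate y_{n,j}({u,w}, b): the monomial x_{un} x_{wn} x_{bj}.\<close>
definition ycoord :: "nat \<Rightarrow> nat \<Rightarrow> nat \<Rightarrow> nat \<Rightarrow> nat \<Rightarrow> coord" where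
  "ycoord n j u w b = (j, Poly_Mapping.single (u, n) 1 + Poly_Mapping.single (w, n) 1
                          + Poly_Mapping.single (b, j) 1)"

definition omega :: "nat \<Rightarrow> nat \<Rightarrow> real" where
  "omega u w = (if u = w then 1 else 2)"

definition admissible_f :: "nat \<Rightarrow> (nat \<Rightarrow> nat) \<Rightarrow> (nat \<Rightarrow> nat) \<Rightarrow> bool" where
  "admissible_f r alpha f \<longleftrightarrow>
     (\<forall>p<r. f p < r) \<and>
     (\<forall>m<r. card {p. p < r \<and> f p = m} = alpha m) \<and>
     (\<forall>p<r. \<forall>l>0. (f ^^ l) p = p \<longrightarrow> f p = p)"

text \<open>D_{alpha,L}(y) as a polynomial in the coordinates (with f the chosen map for alpha).\<close>
definition Dpoly :: "nat \<Rightarrow> nat \<Rightarrow> nat \<Rightarrow> (nat \<Rightarrow> nat) \<Rightarrow> (nat \<Rightarrow> nat) \<Rightarrow> (nat \<Rightarrow> nat) \<Rightarrow> coord rpoly" where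
  "Dpoly n j r k f L = det (mat r r (\<lambda>(p, q).
      pconst (omega (k (f p)) (k p)) * pvar (ycoord n j (k (f p)) (k p) (L q))))"

definition multiidx :: "nat \<Rightarrow> (nat \<Rightarrow> nat) set" where
  "multiidx r = {alpha. (\<forall>m\<ge>r. alpha m = 0) \<and> (\<Sum>m<r. alpha m) = r}"

end

theory Submission
  imports Defs "HOL-Combinatorics.Cycles"
begin

definition mon :: "('v \<Rightarrow> real) \<Rightarrow> ('v \<Rightarrow>\<^sub>0 nat) \<Rightarrow> real" where
  "mon z m = (\<Prod>x\<in>Poly_Mapping.keys m. z x ^ Poly_Mapping.lookup m x)"

lemma peval_mon: "peval z P = (\<Sum>m\<in>Poly_Mapping.keys P. Poly_Mapping.lookup P m * mon z m)"
  unfolding peval_def mon_def ..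

lemma mon_superset:
  assumes "finite S" "Poly_Mapping.keys m \<subseteq> S"
  shows "mon z m = (\<Prod>x\<in>S. z x ^ Poly_Mapping.lookup m x)"
  unfolding mon_def
  by (rule prod.mono_neutral_left) (use assms in \<open>auto simp: in_keys_iff\<close>)

lemma mon_add: "mon z (a + b) = mon z a * mon z b"
proof -
  let ?S = "Poly_Mapping.keys a \<union> Poly_Mapping.keys b"
  have "mon z (a + b) = (\<Prod>x\<in>?S. z x ^ Poly_Mapping.lookup (a+b) x)"
    by (rule mon_superset) (use keys_add[of a b] in auto)
  also have "\<dots> = (\<Prod>x\<in>?S. z x ^ Poly_Mapping.lookup a x) * (\<Prod>x\<in>?S. z x ^ Poly_Mapping.lookup b x)"
    by (simp add: lookup_add power_add prod.distrib)
  also have "\<dots> = mon z a * mon z b"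
    by (subst (1 2) mon_superset[where S = ?S]) auto
  finally show ?thesis .
qed

lemma mon_zero[simp]: "mon z 0 = 1"
  unfolding mon_def by simp

lemma peval_single: "peval z (Poly_Mapping.single m c) = c * mon z m"
  unfolding peval_mon by auto

lemma peval_zero[simp]: "peval z 0 = 0"
  unfolding peval_def by simp

lemma peval_add: "peval z (p + q) = peval z p + peval z q"
  unfolding peval_def
  by (rule setsum_keys_plus_distrib) (auto simp: algebra_simps)

lemma peval_sum: "peval z (\<Sum>i\<in>I. f i) = (\<Sum>i\<in>I. peval z (f i))"
  by (induction I rule: infinite_finite_induct) (auto simp: peval_add)

lemma pm_decomp:
  "(\<Sum>m\<in>Poly_Mapping.keys p. Poly_Mapping.single m (Poly_Mapping.lookup p m)) = p"
proof (rule poly_mapping_eqI)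
  fix x
  show "Poly_Mapping.lookup (\<Sum>m\<in>Poly_Mapping.keys p. Poly_Mapping.single m (Poly_Mapping.lookup p m)) x
        = Poly_Mapping.lookup p x"
    by (cases "x \<in> Poly_Mapping.keys p")
       (auto simp: lookup_sum lookup_single when_def in_keys_iff)
qed

lemma peval_mult: "peval z (p * q) = peval z p * peval z (q :: 'v rpoly)"
proof -
  have "p * q = (\<Sum>m\<in>Poly_Mapping.keys p. Poly_Mapping.single m (Poly_Mapping.lookup p m))
              * (\<Sum>m\<in>Poly_Mapping.keys q. Poly_Mapping.single m (Poly_Mapping.lookup q m))"
    by (simp only: pm_decomp)
  also have "\<dots> = (\<Sum>a\<in>Poly_Mapping.keys p. \<Sum>b\<in>Poly_Mapping.keys q.
       Poly_Mapping.single (a + b) (Poly_Mapping.lookup p a * Poly_Mapping.lookup q b))"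
    by (simp add: sum_product mult_single)
  finally have "peval z (p * q) = (\<Sum>a\<in>Poly_Mapping.keys p. \<Sum>b\<in>Poly_Mapping.keys q.
       Poly_Mapping.lookup p a * Poly_Mapping.lookup q b * mon z (a + b))"
    by (simp add: peval_sum peval_single)
  also have "\<dots> = peval z p * peval z q"
    unfolding peval_mon mon_add sum_product by (simp add: ac_simps)
  finally show ?thesis .
qed

lemma peval_one: "peval z 1 = 1"
  unfolding peval_mon by simp

interpretation peval_hom: comm_ring_hom "peval z"
  by unfold_locales (auto simp: peval_add peval_mult peval_one)

lemma peval_pvar[simp]: "peval z (pvar x) = z x"
  unfolding pvar_def peval_single mon_def by simp

lemma peval_pconst[simp]: "peval z (pconst c) = c"
  unfolding pconst_def peval_single by simp

subsection \<open>Homogeneity\<close>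

lemma mdeg_superset:
  assumes "finite S" "Poly_Mapping.keys m \<subseteq> S"
  shows "mdeg m = (\<Sum>x\<in>S. Poly_Mapping.lookup m x)"
  unfolding mdeg_def
  by (rule sum.mono_neutral_left) (use assms in \<open>auto simp: in_keys_iff\<close>)

lemma mdeg_add: "mdeg (a + b) = mdeg a + mdeg (b :: 'v \<Rightarrow>\<^sub>0 nat)"
proof -
  let ?S = "Poly_Mapping.keys a \<union> Poly_Mapping.keys b"
  have "mdeg (a + b) = (\<Sum>x\<in>?S. Poly_Mapping.lookup (a+b) x)"
    by (rule mdeg_superset) (use keys_add[of a b] in auto)
  also have "\<dots> = (\<Sum>x\<in>?S. Poly_Mapping.lookup a x) + (\<Sum>x\<in>?S. Poly_Mapping.lookup b x)"
    by (simp add: lookup_add sum.distrib)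
  also have "\<dots> = mdeg a + mdeg b"
    by (subst (1 2) mdeg_superset[where S = ?S]) auto
  finally show ?thesis .
qed

lemma hog_zero[simp]: "homogeneous_of_degree d (0 :: 'v rpoly)"
  unfolding homogeneous_of_degree_def by simp

lemma hog_add: "homogeneous_of_degree d p \<Longrightarrow> homogeneous_of_degree d q
   \<Longrightarrow> homogeneous_of_degree d (p + q :: 'v rpoly)"
  unfolding homogeneous_of_degree_def using keys_add[of p q] by blast

lemma hog_uminus: "homogeneous_of_degree d p \<Longrightarrow> homogeneous_of_degree d (- p :: 'v rpoly)"
  unfolding homogeneous_of_degree_def by simp

lemma hog_diff: "homogeneous_of_degree d p \<Longrightarrow> homogeneous_of_degree d q
   \<Longrightarrow> homogeneous_of_degree d (p - q :: 'v rpoly)"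
  using hog_add[of d p "- q"] hog_uminus[of d q] by simp

lemma hog_mult: "homogeneous_of_degree d1 p \<Longrightarrow> homogeneous_of_degree d2 q
   \<Longrightarrow> homogeneous_of_degree (d1 + d2) (p * q :: 'v rpoly)"
  unfolding homogeneous_of_degree_def using keys_mult[of p q] by (force simp: mdeg_add)

lemma hog_sum: "(\<And>i. i \<in> I \<Longrightarrow> homogeneous_of_degree d (f i))
   \<Longrightarrow> homogeneous_of_degree d (\<Sum>i\<in>I. f i :: 'v rpoly)"
  by (induction I rule: infinite_finite_induct) (auto intro: hog_add)

lemma hog_one: "homogeneous_of_degree 0 (1 :: 'v rpoly)"
  unfolding homogeneous_of_degree_def by (simp add: mdeg_def)

lemma hog_prod: "(\<And>i. i \<in> I \<Longrightarrow> homogeneous_of_degree 1 (f i))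
   \<Longrightarrow> homogeneous_of_degree (card I) (\<Prod>i\<in>I. f i :: 'v rpoly)"
proof (induction I rule: infinite_finite_induct)
  case (insert x F)
  then show ?case using hog_mult[of 1 "f x" "card F" "prod f F"] by simp
qed (auto intro: hog_one)

lemma hog_sign: "homogeneous_of_degree d p \<Longrightarrow>
   homogeneous_of_degree d (of_int (sign s) * p :: 'v rpoly)"
  by (cases s rule: sign_cases) (auto intro: hog_uminus)

lemma hog_entry: "homogeneous_of_degree 1 (pconst c * pvar x :: 'v rpoly)"
  unfolding homogeneous_of_degree_def pconst_def pvar_def mult_single
  by (simp add: mdeg_def)

lemma hog_Dpoly: "homogeneous_of_degree r (Dpoly n j r k f L)"
  unfolding Dpoly_def det_def
  by (auto intro!: hog_sum hog_sign hog_prod[of "{0..<r}", simplified] hog_entry[simplified])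

subsection \<open>The coordinates of mu\<close>

lemma pconst_pvar: "pconst c * pvar x = Poly_Mapping.single (Poly_Mapping.single x 1) c"
  unfolding pconst_def pvar_def mult_single by simp

lemma pvar_pconst_pvar: "pvar x * pconst c * pvar y =
   Poly_Mapping.single (Poly_Mapping.single x 1 + Poly_Mapping.single y 1) c"
  unfolding pconst_def pvar_def mult_single by simp

lemma phi_expand: "phi_poly a d t Q K v j = (\<Sum>m<t. \<Sum>u<d. \<Sum>p<d. \<Sum>q<d.
   Poly_Mapping.single (Poly_Mapping.single (u,m) 1 + Poly_Mapping.single (p,m) 1
      + Poly_Mapping.single (q,j) 1) (v u * Amat a Q K p q))"
  unfolding phi_poly_def pconst_pvar pvar_pconst_pvar
  apply (simp only: sum_distrib_right)
  apply (simp add: sum_distrib_left mult_single add.assoc)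
  done

lemma mono_eq:
  assumes "n \<noteq> j"
  shows "(Poly_Mapping.single (u,m) 1 + Poly_Mapping.single (p,m) 1 + Poly_Mapping.single (q,j) 1
     = Poly_Mapping.single (u0,n) 1 + Poly_Mapping.single (w0,n) 1 + Poly_Mapping.single (b,j) (1::nat))
   \<longleftrightarrow> (m = n \<and> q = b \<and> ((u = u0 \<and> p = w0) \<or> (u = w0 \<and> p = u0)))" (is "?L = ?R \<longleftrightarrow> _")
proof
  assume E: "?L = ?R"
  have l: "Poly_Mapping.lookup ?L x = Poly_Mapping.lookup ?R x" for x using E by simp
  note l1 = l[of "(u0,n)"] l[of "(w0,n)"] l[of "(b,j)"] l[of "(u,m)"] l[of "(p,m)"] l[of "(q,j)"]
  from l1 assms show "m = n \<and> q = b \<and> ((u = u0 \<and> p = w0) \<or> (u = w0 \<and> p = u0))"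
    by (simp add: lookup_add lookup_single when_def split: if_splits)
qed (auto simp: ac_simps)

lemma lookup_phi:
  assumes "n \<noteq> j" "n < t" "u0 < d" "w0 < d" "b < d"
  shows "Poly_Mapping.lookup (phi_poly a d t Q K v j)
     (Poly_Mapping.single (u0,n) 1 + Poly_Mapping.single (w0,n) 1 + Poly_Mapping.single (b,j) 1)
   = (if u0 = w0 then v u0 * Amat a Q K u0 b else v u0 * Amat a Q K w0 b + v w0 * Amat a Q K u0 b)"
proof -
  let ?X = "\<lambda>u p. (u = u0 \<and> p = w0) \<or> (u = w0 \<and> p = u0)"
  let ?A = "Amat a Q K"
  have "Poly_Mapping.lookup (phi_poly a d t Q K v j)
     (Poly_Mapping.single (u0,n) 1 + Poly_Mapping.single (w0,n) 1 + Poly_Mapping.single (b,j) 1)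
    = (\<Sum>m<t. \<Sum>u<d. \<Sum>p<d. \<Sum>q<d. if m = n \<and> q = b \<and> ?X u p then v u * ?A p q else 0)"
    by (simp add: phi_expand lookup_sum lookup_single when_def mono_eq[OF assms(1), simplified])
  also have "\<dots> = (\<Sum>m<t. if m = n then (\<Sum>u<d. \<Sum>p<d. if ?X u p then v u * ?A p b else 0) else 0)"
  proof (rule sum.cong[OF refl])
    fix m
    show "(\<Sum>u<d. \<Sum>p<d. \<Sum>q<d. if m = n \<and> q = b \<and> ?X u p then v u * ?A p q else 0) =
      (if m = n then (\<Sum>u<d. \<Sum>p<d. if ?X u p then v u * ?A p b else 0) else 0)"
    proof (cases "m = n")
      case True
      have "(\<Sum>q<d. if m = n \<and> q = b \<and> ?X u p then v u * ?A p q else 0)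
           = (if ?X u p then v u * ?A p b else 0)" for u p
        using True assms(5) by (cases "?X u p") auto
      then show ?thesis using True by simp
    qed simp
  qed
  also have "\<dots> = (\<Sum>u<d. \<Sum>p<d. if ?X u p then v u * ?A p b else 0)"
    using assms(2) by simp
  also have "\<dots> = (if u0 = w0 then v u0 * ?A u0 b else v u0 * ?A w0 b + v w0 * ?A u0 b)"
  proof (cases "u0 = w0")
    case True
    have "(\<Sum>p<d. if ?X u p then v u * ?A p b else 0) =
      (if u = u0 then v u * ?A u0 b else 0)" for u
      using True assms by (cases "u = u0") auto
    then show ?thesis using True assms by simp
  next
    case False
    have "(\<Sum>p<d. if ?X u p then v u * ?A p b else 0) =
      (if u = u0 then v u * ?A w0 b else 0) + (if u = w0 then v u * ?A u0 b else 0)" for u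
      using False assms by (cases "u = u0"; cases "u = w0") auto
    then show ?thesis using False assms by (simp add: sum.distrib)
  qed
  finally show ?thesis .
qed

lemma orderings_mo:
  assumes "n \<noteq> j"
  shows "orderings j (Poly_Mapping.single (u0,n) 1 + Poly_Mapping.single (w0,n) 1
      + Poly_Mapping.single (b,j) 1) = (if u0 = w0 then 1 else 2)"
proof -
  let ?mo = "Poly_Mapping.single (u0,n) 1 + Poly_Mapping.single (w0,n) 1
      + Poly_Mapping.single (b,j) (1::nat)"
  have S: "{x\<in>Poly_Mapping.keys ?mo. snd x \<noteq> j} = {(u0,n),(w0,n)}"
    using assms by (auto simp: in_keys_iff lookup_add lookup_single when_def split: if_splits)
  show ?thesis
  proof (cases "u0 = w0")
    case True
    then show ?thesis unfolding orderings_def S using assms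
      by (simp add: lookup_add lookup_single when_def)
  next
    case False
    then show ?thesis unfolding orderings_def S using assms
      by (simp add: lookup_add lookup_single when_def)
  qed
qed

lemma mu_ycoord:
  assumes "n \<noteq> j" "n < t" "j < t" "u0 < d" "w0 < d" "b < d"
  shows "omega u0 w0 * mu a d t Q K v (ycoord n j u0 w0 b) =
    (if u0 = w0 then v u0 * Amat a Q K u0 b else v u0 * Amat a Q K w0 b + v w0 * Amat a Q K u0 b)"
  unfolding mu_def ycoord_def
  using assms lookup_phi[OF assms(1,2,4,5,6), of a Q K v, simplified]
    orderings_mo[OF assms(1), of u0 w0 b, simplified]
  by (simp add: omega_def)

subsection \<open>The determinant identity\<close>

lemma perm_id:
  fixes r :: nat and \<sigma> f :: "nat \<Rightarrow> nat"
  assumes sg: "\<sigma> permutes {0..<r}" and fr: "\<forall>p<r. f p < r"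
    and cyc: "\<forall>p<r. \<forall>l>0. (f ^^ l) p = p \<longrightarrow> f p = p"
    and H: "\<forall>i<r. \<sigma> i = i \<or> (\<sigma> i = f i \<and> f i \<noteq> i)"
  shows "\<sigma> = id"
proof (rule ccontr)
  assume "\<sigma> \<noteq> id"
  then obtain p where sp: "\<sigma> p \<noteq> p" by (metis eq_id_iff)
  then have pr: "p < r" using permutes_not_in[OF sg] by force
  have inj: "inj \<sigma>" using permutes_inj[OF sg] .
  have A: "\<sigma> ((\<sigma> ^^ l) p) \<noteq> (\<sigma> ^^ l) p" for l
  proof
    assume "\<sigma> ((\<sigma> ^^ l) p) = (\<sigma> ^^ l) p"
    hence "(\<sigma> ^^ l) (\<sigma> p) = (\<sigma> ^^ l) p" by (simp add: funpow_swap1)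
    hence "\<sigma> p = p" using inj_fn[OF inj, of l] by (simp add: inj_eq)
    with sp show False ..
  qed
  have B: "(\<sigma> ^^ l) p = (f ^^ l) p \<and> (f ^^ l) p < r" for l
  proof (induction l)
    case 0 then show ?case using pr by simp
  next
    case (Suc l)
    then have "\<sigma> ((\<sigma> ^^ l) p) = f ((\<sigma> ^^ l) p)" using H A[of l] by metis
    then show ?case using Suc fr by simp
  qed
  obtain l where l: "\<sigma> ^^ l = id" "l > 0"
  proof -
    have fin: "finite {0..<r}" by simp
    show ?thesis using permutation_is_nilpotent[OF permutes_imp_permutation[OF fin sg]] that by blast
  qed
  then have "(f ^^ l) p = p" using B[of l] by (metis id_apply)
  then have "f p = p" using cyc pr l(2) by blast
  moreover have "\<sigma> p = f p" using B[of 1] by simp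
  ultimately show False using sp by simp
qed

lemma det_T:
  assumes fr: "\<forall>p<r. f p < r"
    and cyc: "\<forall>p<r. \<forall>l>0. (f ^^ l) p = p \<longrightarrow> f p = p"
  shows "det (mat r r (\<lambda>(p,s). (if s = p then c p else 0)
            + (if s = f p \<and> f p \<noteq> p then e p else (0::real)))) = (\<Prod>p<r. c p)"
    (is "det ?T = _")
proof -
  let ?P = "{\<sigma>. \<sigma> permutes {0..<r}}"
  let ?g = "\<lambda>\<sigma>. of_int (sign \<sigma>) * (\<Prod>i = 0..<r. ?T $$ (i, \<sigma> i))"
  have T: "?T \<in> carrier_mat r r" by simp
  have z: "?g \<sigma> = 0" if "\<sigma> \<in> ?P - {id}" for \<sigma>
  proof -
    from that have sg: "\<sigma> permutes {0..<r}" and ne: "\<sigma> \<noteq> id" by auto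
    obtain i where i: "i < r" "\<not> (\<sigma> i = i \<or> (\<sigma> i = f i \<and> f i \<noteq> i))"
      using perm_id[OF sg fr cyc] ne by blast
    have "\<sigma> i < r" using permutes_in_image[OF sg] i(1) by simp
    then have "?T $$ (i, \<sigma> i) = 0" using i by auto
    then have "(\<Prod>i = 0..<r. ?T $$ (i, \<sigma> i)) = 0"
      using i(1) by (intro prod_zero) auto
    then show ?thesis by simp
  qed
  have "det ?T = sum ?g ?P" by (rule det_def'[OF T])
  also have "\<dots> = ?g id + sum ?g (?P - {id})"
    by (rule sum.remove) (auto simp: permutes_id finite_permutations)
  also have "sum ?g (?P - {id}) = 0" using z by (intro sum.neutral) blast
  also have "?g id = (\<Prod>i = 0..<r. c i)" by (simp, intro prod.cong) auto
  finally show ?thesis by (simp add: atLeast0LessThan)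
qed

lemma peval_Dpoly:
  assumes nj: "n \<noteq> j" "n < t" "j < t"
    and kd: "\<forall>p<r. k p < d" and kinj: "inj_on k {..<r}" and Ld: "\<forall>q<r. L q < d"
    and fr: "\<forall>p<r. f p < r"
    and cyc: "\<forall>p<r. \<forall>l>0. (f ^^ l) p = p \<longrightarrow> f p = p"
  shows "peval (mu a d t Q K v) (Dpoly n j r k f L)
     = (\<Prod>p<r. v (k (f p))) * det (mat r r (\<lambda>(s,q). Amat a Q K (k s) (L q)))"
proof -
  let ?z = "mu a d t Q K v"
  let ?A = "Amat a Q K"
  let ?T = "mat r r (\<lambda>(p,s). (if s = p then v (k (f p)) else 0)
            + (if s = f p \<and> f p \<noteq> p then v (k p) else (0::real)))"
  let ?B = "mat r r (\<lambda>(s,q). ?A (k s) (L q))"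
  let ?M = "mat r r (\<lambda>(p, q).
      pconst (omega (k (f p)) (k p)) * pvar (ycoord n j (k (f p)) (k p) (L q)))"
  have "peval ?z (Dpoly n j r k f L) = det (map_mat (peval ?z) ?M)"
    unfolding Dpoly_def by (rule peval_hom.hom_det[symmetric])
  also have "map_mat (peval ?z) ?M = ?T * ?B"
  proof (rule eq_matI)
    fix p q assume pq: "p < dim_row (?T * ?B)" "q < dim_col (?T * ?B)"
    then have p: "p < r" and q: "q < r" by auto
    have fp: "f p < r" using fr p by auto
    have keq: "k (f p) = k p \<longleftrightarrow> f p = p"
      using kinj fp p by (auto dest: inj_onD)
    have lhs: "map_mat (peval ?z) ?M $$ (p, q) =
       (if f p = p then v (k p) * ?A (k p) (L q)
        else v (k (f p)) * ?A (k p) (L q) + v (k p) * ?A (k (f p)) (L q))"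
      using p q mu_ycoord[OF nj, of "k (f p)" d "k p" "L q" a Q K v] kd Ld fp keq
      by (auto simp: peval_mult)
    have "(?T * ?B) $$ (p, q) = (\<Sum>s = 0..<r.
        ((if s = p then v (k (f p)) else 0) + (if s = f p \<and> f p \<noteq> p then v (k p) else 0))
        * ?A (k s) (L q))"
      using p q by (simp add: scalar_prod_def)
    also have "\<dots> = v (k (f p)) * ?A (k p) (L q)
        + (if f p \<noteq> p then v (k p) * ?A (k (f p)) (L q) else 0)"
    proof (cases "f p = p")
      case True
      have "(\<Sum>s = 0..<r.
        ((if s = p then v (k (f p)) else 0) + (if s = f p \<and> f p \<noteq> p then v (k p) else 0))
        * ?A (k s) (L q)) = (\<Sum>s = 0..<r. if s = p then v (k (f p)) * ?A (k p) (L q) else 0)"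
        using True by (intro sum.cong) auto
      then show ?thesis using True p by simp
    next
      case False
      have "(\<Sum>s = 0..<r.
        ((if s = p then v (k (f p)) else 0) + (if s = f p \<and> f p \<noteq> p then v (k p) else 0))
        * ?A (k s) (L q)) = (\<Sum>s = 0..<r. (if s = p then v (k (f p)) * ?A (k p) (L q) else 0)
           + (if s = f p then v (k p) * ?A (k (f p)) (L q) else 0))"
        using False by (intro sum.cong) auto
      also have "\<dots> = v (k (f p)) * ?A (k p) (L q) + v (k p) * ?A (k (f p)) (L q)"
        using p fp by (simp add: sum.distrib)
      finally show ?thesis using False by simp
    qed
    finally show "map_mat (peval ?z) ?M $$ (p, q) = (?T * ?B) $$ (p, q)"
      using lhs by auto
  qed auto
  also have "det (?T * ?B) = det ?T * det ?B"
    by (rule det_mult) auto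
  also have "det ?T = (\<Prod>p<r. v (k (f p)))"
    using det_T[OF fr cyc] by simp
  finally show ?thesis .
qed

theorem mainTheorem13:
  fixes a d t j n r :: nat and k L L' :: "nat \<Rightarrow> nat"
    and F :: "(nat \<Rightarrow> nat) \<Rightarrow> (nat \<Rightarrow> nat)"
  assumes "t > 1" and "j < t" and "n < t" and "n \<noteq> j"
    and "2 \<le> r" and "r \<le> min a d"
    and "\<forall>p<r. k p < d" and "inj_on k {..<r}"
    and "\<forall>q<r. L q < d" and "inj_on L {..<r}"
    and "\<forall>q<r. L' q < d" and "inj_on L' {..<r}"
    and "\<exists>q<r. L q \<noteq> L' q"
    and "\<forall>alpha\<in>multiidx r. admissible_f r alpha (F alpha)"
  shows "\<forall>alpha\<in>multiidx r. \<forall>beta\<in>multiidx r.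
     (let P = Dpoly n j r k (F alpha) L * Dpoly n j r k (F beta) L'
            - Dpoly n j r k (F beta) L * Dpoly n j r k (F alpha) L'
      in homogeneous_of_degree (2 * r) P \<and> (\<forall>z\<in>attention_variety a d t. peval z P = 0))"
proof (intro ballI)
  fix alpha beta assume al: "alpha \<in> multiidx r" and be: "beta \<in> multiidx r"
  let ?P = "Dpoly n j r k (F alpha) L * Dpoly n j r k (F beta) L'
            - Dpoly n j r k (F beta) L * Dpoly n j r k (F alpha) L'"
  have hom: "homogeneous_of_degree (2 * r) ?P"
    using hog_diff[OF hog_mult[OF hog_Dpoly hog_Dpoly] hog_mult[OF hog_Dpoly hog_Dpoly]]
    by (simp add: mult_2)
  have adm: "\<forall>p<r. F g p < r" "\<forall>p<r. \<forall>l>0. (F g ^^ l) p = p \<longrightarrow> F g p = p"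
    if "g \<in> multiidx r" for g
    using assms(14) that unfolding admissible_f_def by blast+
  have van: "peval w ?P = 0" if wr: "w \<in> range (\<lambda>(Q, K, v). mu a d t Q K v)" for w
  proof -
    obtain x where x: "w = (\<lambda>(Q, K, v). mu a d t Q K v) x" using wr by blast
    obtain Q K v where "x = (Q, K, v)" by (cases x)
    then have w: "w = mu a d t Q K v" using x by simp
    note e = peval_Dpoly[OF assms(4,3,2,7,8), of _ _ a Q K v]
    show ?thesis unfolding w
      using e[OF assms(9) adm[OF al]] e[OF assms(9) adm[OF be]]
        e[OF assms(11) adm[OF al]] e[OF assms(11) adm[OF be]]
      by (simp add: peval_hom.hom_minus peval_mult)
  qed
  have "\<forall>z\<in>attention_variety a d t. peval z ?P = 0"
    unfolding attention_variety_def zariski_closure_def using van by blast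
  then show "let P = ?P in homogeneous_of_degree (2 * r) P \<and> (\<forall>z\<in>attention_variety a d t. peval z P = 0)"
    using hom by simp
qed

end
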